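(* For all $u,v\in\mathfrak{A}^0_{\mathrm{G}}$, we have $u\sqcup\!\sqcup v\in\mathfrak{A}^0_{\mathrm{G}}$.
   Context: $\mathbb{Q}\langle\pi,y\rangle$ is the free noncommutative $\mathbb{Q}$-algebra on $\pi,y$ with unit $\mathbf{1}$, and $\rho=\pi-\mathbf{1}$. For integers $0\le t\le s$ set $z_{t,s}=\rho^t\pi^{s-t}y$. $\mathfrak{A}^0_{\mathrm{G}}$ is the $\mathbb{Q}$-span in $\mathbb{Q}\langle\pi,y\rangle$ of all products $z_{t_1,s_1}z_{t_2,s_2}\cdots z_{t_d,s_d}$ ($d\ge1$) with $1\le t_1\le s_1$ and $0\le t_j\le s_j$ for $j\ge2$. The shuffle $\sqcup\!\sqcup$ is the bilinear product on $\mathbb{Q}\langle\pi,y\rangle$ with $\mathbf{1}\sqcup\!\sqcup u=u\sqcup\!\sqcup\mathbf{1}=u$, $(yu)\sqcup\!\sqcup v=u\sqcup\!\sqcup(yv)=y(u\sqcup\!\sqcup v)$, $\pi u\sqcup\!\sqcup\pi v=\pi(u\sqcup\!\sqcup\pi v)+\pi(\pi u\sqcup\!\sqcup v)-\pi(u\sqcup\!\sqcup v)$ for words $u,v$. *)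

theory Defs
  imports Complex_Main "HOL-Library.Poly_Mapping"
begin

text \<open>The free noncommutative Q-algebra Q<pi,y>: finitely supported Q-valued
  functions on words over the alphabet {pi, y}, with concatenation product.\<close>

datatype letter = Pi | Y

type_synonym word = "letter list"
type_synonym ncpoly = "word \<Rightarrow>\<^sub>0 rat"

definition smult :: "rat \<Rightarrow> ncpoly \<Rightarrow> ncpoly" where
  "smult c p = (\<Sum>u\<in>Poly_Mapping.keys p. Poly_Mapping.single u (c * Poly_Mapping.lookup p u))"

definition nmul :: "ncpoly \<Rightarrow> ncpoly \<Rightarrow> ncpoly" where
  "nmul p q = (\<Sum>u\<in>Poly_Mapping.keys p. \<Sum>v\<in>Poly_Mapping.keys q.
      Poly_Mapping.single (u @ v) (Poly_Mapping.lookup p u * Poly_Mapping.lookup q v))"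

definition one :: ncpoly where "one = Poly_Mapping.single [] 1"
definition piv :: ncpoly where "piv = Poly_Mapping.single [Pi] 1"
definition yv :: ncpoly where "yv = Poly_Mapping.single [Y] 1"
definition rho :: ncpoly where "rho = piv - one"

primrec npow :: "ncpoly \<Rightarrow> nat \<Rightarrow> ncpoly" where
  "npow x 0 = one"
| "npow x (Suc n) = nmul x (npow x n)"

definition z :: "nat \<Rightarrow> nat \<Rightarrow> ncpoly" where
  "z t s = nmul (npow rho t) (nmul (npow piv (s - t)) yv)"

fun zprod :: "(nat \<times> nat) list \<Rightarrow> ncpoly" where
  "zprod [] = one"
| "zprod ((t, s) # ps) = nmul (z t s) (zprod ps)"

inductive_set qspan :: "ncpoly set \<Rightarrow> ncpoly set" for S where
  qspan_zero: "0 \<in> qspan S"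
| qspan_gen: "x \<in> S \<Longrightarrow> x \<in> qspan S"
| qspan_add: "a \<in> qspan S \<Longrightarrow> b \<in> qspan S \<Longrightarrow> a + b \<in> qspan S"
| qspan_smult: "a \<in> qspan S \<Longrightarrow> smult c a \<in> qspan S"

definition AG0 :: "ncpoly set" where
  "AG0 = qspan {zprod ps | ps. ps \<noteq> [] \<and> 1 \<le> fst (hd ps)
                   \<and> (\<forall>(t, s) \<in> set ps. t \<le> s)}"

definition prep :: "letter \<Rightarrow> ncpoly \<Rightarrow> ncpoly" where
  "prep a p = nmul (Poly_Mapping.single [a] 1) p"

function wsh :: "word \<Rightarrow> word \<Rightarrow> ncpoly" where
  "wsh [] v = Poly_Mapping.single v 1"
| "wsh (a # u) [] = Poly_Mapping.single (a # u) 1"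
| "wsh (Y # u) (b # v) = prep Y (wsh u (b # v))"
| "wsh (Pi # u) (Y # v) = prep Y (wsh (Pi # u) v)"
| "wsh (Pi # u) (Pi # v) = prep Pi (wsh u (Pi # v)) + prep Pi (wsh (Pi # u) v)
                            - prep Pi (wsh u v)"
  by pat_completeness auto
termination by (relation "measure (\<lambda>(u, v). length u + length v)") auto

definition shuffle :: "ncpoly \<Rightarrow> ncpoly \<Rightarrow> ncpoly" where
  "shuffle p q = (\<Sum>u\<in>Poly_Mapping.keys p. \<Sum>v\<in>Poly_Mapping.keys q. smult (Poly_Mapping.lookup p u * Poly_Mapping.lookup q v) (wsh u v))"

end

theory Submission imports Defs begin

abbreviation lk :: "ncpoly \<Rightarrow> word \<Rightarrow> rat" where "lk \<equiv> Poly_Mapping.lookup"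
abbreviation ks :: "ncpoly \<Rightarrow> word set" where "ks \<equiv> Poly_Mapping.keys"
abbreviation sg :: "word \<Rightarrow> rat \<Rightarrow> ncpoly" where "sg \<equiv> Poly_Mapping.single"

definition lin :: "(word \<Rightarrow> rat \<Rightarrow> ncpoly) \<Rightarrow> ncpoly \<Rightarrow> ncpoly" where
  "lin g p = (\<Sum>u\<in>ks p. g u (lk p u))"

definition addv :: "(word \<Rightarrow> rat \<Rightarrow> ncpoly) \<Rightarrow> bool" where
  "addv g \<longleftrightarrow> (\<forall>u a b. g u (a + b) = g u a + g u b)"

lemma addv_zero: "addv g \<Longrightarrow> g u 0 = 0"
  unfolding addv_def by (metis add_cancel_right_right add_0)

lemma lin_superset:
  assumes "finite S" "ks p \<subseteq> S" "\<And>u. g u 0 = 0"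
  shows "lin g p = (\<Sum>u\<in>S. g u (lk p u))"
  unfolding lin_def
  by (rule sum.mono_neutral_left) (use assms in \<open>auto simp: in_keys_iff\<close>)

lemma lin_add:
  assumes "addv g" shows "lin g (p + q) = lin g p + lin g q"
proof -
  have z: "\<And>u. g u 0 = 0" using addv_zero[OF assms] .
  let ?S = "ks p \<union> ks q"
  have "lin g (p + q) = (\<Sum>u\<in>?S. g u (lk (p+q) u))"
    by (rule lin_superset) (use keys_add[of p q] z in auto)
  also have "\<dots> = (\<Sum>u\<in>?S. g u (lk p u)) + (\<Sum>u\<in>?S. g u (lk q u))"
    using assms by (simp add: lookup_add addv_def sum.distrib)
  also have "\<dots> = lin g p + lin g q"
    using lin_superset[of ?S p g] lin_superset[of ?S q g] z by auto
  finally show ?thesis .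
qed

lemma lin_zero[simp]: "lin g 0 = 0" by (simp add: lin_def)

lemma lin_diff:
  assumes "addv g" shows "lin g (p - q) = lin g p - lin g q"
  using lin_add[OF assms, of "p - q" q] by simp

lemma lin_single:
  assumes "g u 0 = 0" shows "lin g (sg u a) = g u a"
  using assms by (simp add: lin_def)

lemma lin_sum:
  assumes "addv g" shows "lin g (\<Sum>i\<in>I. f i) = (\<Sum>i\<in>I. lin g (f i))"
  by (induction I rule: infinite_finite_induct) (auto simp: lin_add[OF assms])

lemma repr: "(\<Sum>u\<in>ks p. sg u (lk p u)) = p"
proof (rule poly_mapping_eqI)
  fix w
  have "lk (\<Sum>u\<in>ks p. sg u (lk p u)) w = (\<Sum>u\<in>ks p. (if u = w then lk p u else 0))"
    by (simp add: lookup_sum lookup_single when_def)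
  also have "\<dots> = lk p w" by (simp add: in_keys_iff)
  finally show "lk (\<Sum>u\<in>ks p. sg u (lk p u)) w = lk p w" .
qed

lemma lin_sg: "lin sg p = p" using repr by (simp add: lin_def)

lemma smult_lin: "smult c p = lin (\<lambda>u a. sg u (c * a)) p"
  by (simp add: smult_def lin_def)

lemma lookup_smult[simp]: "lk (smult c p) w = c * lk p w"
proof -
  have "lk (smult c p) w = (\<Sum>u\<in>ks p. (if u = w then c * lk p u else 0))"
    by (simp add: smult_def lookup_sum lookup_single when_def)
  also have "\<dots> = c * lk p w" by (simp add: in_keys_iff)
  finally show ?thesis .
qed

lemma keys_smult: "ks (smult c p) \<subseteq> ks p"
  by (auto simp: in_keys_iff)

lemma smult_add_right: "smult c (p + q) = smult c p + smult c q"
  by (rule poly_mapping_eqI) (simp add: lookup_add algebra_simps)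
lemma smult_diff_right: "smult c (p - q) = smult c p - smult c q"
  by (rule poly_mapping_eqI) (simp add: lookup_minus algebra_simps)
lemma smult_add_left: "smult (c + d) p = smult c p + smult d p"
  by (rule poly_mapping_eqI) (simp add: lookup_add algebra_simps)
lemma smult_smult: "smult c (smult d p) = smult (c * d) p"
  by (rule poly_mapping_eqI) simp
lemma smult_zero_right[simp]: "smult c 0 = 0"
  by (rule poly_mapping_eqI) simp
lemma smult_zero_left[simp]: "smult 0 p = 0"
  by (rule poly_mapping_eqI) simp
lemma smult_minus1: "smult (-1) p = - p"
  by (rule poly_mapping_eqI) simp
lemma smult_single: "smult c (sg u a) = sg u (c * a)"
  by (rule poly_mapping_eqI) (simp add: lookup_single when_def)
lemma smult_sum: "smult c (\<Sum>i\<in>I. f i) = (\<Sum>i\<in>I. smult c (f i))"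
  by (induction I rule: infinite_finite_induct) (auto simp: smult_add_right)


lemma lin_single_addv: "addv g \<Longrightarrow> lin g (sg u a) = g u a"
  by (rule lin_single) (rule addv_zero)

lemma nmul_lin: "nmul p q = lin (\<lambda>u a. lin (\<lambda>v b. sg (u @ v) (a * b)) q) p"
  by (simp add: nmul_def lin_def)

lemma addv_inner: "addv (\<lambda>v b. sg (u @ v) (a * b))"
  by (simp add: addv_def distrib_left single_add)

lemma addv_outer: "addv (\<lambda>u a. lin (\<lambda>v b. sg (u @ v) (a * b)) q)"
  unfolding addv_def lin_def by (simp add: distrib_right single_add sum.distrib)

lemma nmul_add_left: "nmul (p1 + p2) q = nmul p1 q + nmul p2 q"
  unfolding nmul_lin by (rule lin_add[OF addv_outer])
lemma nmul_diff_left: "nmul (p1 - p2) q = nmul p1 q - nmul p2 q"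
  unfolding nmul_lin by (rule lin_diff[OF addv_outer])

lemma nmul_single_left: "nmul (sg u a) q = (\<Sum>v\<in>ks q. sg (u @ v) (a * lk q v))"
  unfolding nmul_lin by (subst lin_single) (auto simp: lin_def)

lemma nmul_single_single: "nmul (sg u a) (sg v b) = sg (u @ v) (a * b)"
  by (simp add: nmul_single_left)

lemma nmul_one_left: "nmul one q = q"
  unfolding one_def nmul_single_left using repr[of q] by simp

lemma nmul_one_right: "nmul p one = p"
  unfolding one_def nmul_def using repr[of p] by simp

lemma nmul_expand: "nmul p q = (\<Sum>u\<in>ks p. \<Sum>v\<in>ks q. sg (u @ v) (lk p u * lk q v))"
  by (simp add: nmul_def)

lemma nmul_assoc: "nmul (nmul p q) r = nmul p (nmul q r)"
proof -
  have "nmul (nmul p q) r = lin (\<lambda>u a. lin (\<lambda>v b. sg (u @ v) (a * b)) r) (nmul p q)"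
    by (rule nmul_lin)
  also have "\<dots> = (\<Sum>u\<in>ks p. \<Sum>v\<in>ks q. \<Sum>w\<in>ks r. sg (u @ v @ w) (lk p u * lk q v * lk r w))"
    unfolding nmul_expand[of p q] lin_sum[OF addv_outer] lin_single_addv[OF addv_outer]
    by (simp add: lin_def mult.assoc)
  also have "\<dots> = (\<Sum>u\<in>ks p. lin (\<lambda>v b. sg (u @ v) (lk p u * b)) (nmul q r))"
    unfolding nmul_expand[of q r]
    unfolding lin_sum[OF addv_inner] lin_single_addv[OF addv_inner] by (simp add: mult.assoc)
  also have "\<dots> = nmul p (nmul q r)"
    by (simp add: nmul_lin lin_def)
  finally show ?thesis .
qed

lemma keys_sg: "w \<in> ks (sg x c) \<Longrightarrow> w = x"
  by (simp split: if_splits)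

lemma keys_sumD: "w \<in> ks (sum f I) \<Longrightarrow> \<exists>i\<in>I. w \<in> ks (f i)"
  using subsetD[OF keys_sum[of f I]] by blast

lemma keys_nmul: "w \<in> ks (nmul p q) \<Longrightarrow> \<exists>u v. u \<in> ks p \<and> v \<in> ks q \<and> w = u @ v"
proof -
  assume "w \<in> ks (nmul p q)"
  then obtain u where u: "u \<in> ks p" "w \<in> ks (\<Sum>v\<in>ks q. sg (u @ v) (lk p u * lk q v))"
    unfolding nmul_expand by (blast dest: keys_sumD)
  then obtain v where v: "v \<in> ks q" "w \<in> ks (sg (u @ v) (lk p u * lk q v))"
    by (blast dest: keys_sumD)
  then show ?thesis using u(1) keys_sg by blast
qed

lemma prep_expand: "prep a X = (\<Sum>v\<in>ks X. sg (a # v) (lk X v))"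
  unfolding prep_def nmul_single_left by simp

lemma keys_prep: "w \<in> ks (prep a X) \<Longrightarrow> \<exists>v \<in> ks X. w = a # v"
proof -
  assume "w \<in> ks (prep a X)"
  then obtain v where "v \<in> ks X" "w \<in> ks (sg (a # v) (lk X v))"
    unfolding prep_expand by (blast dest: keys_sumD)
  then show ?thesis using keys_sg by blast
qed

lemma npow_piv: "npow piv k = sg (replicate k Pi) 1"
  by (induction k) (simp_all add: one_def piv_def nmul_single_single)

definition phiw :: "word \<Rightarrow> word" where "phiw w = dropWhile (\<lambda>x. x = Pi) w"

lemma phiw_simps[simp]: "phiw [] = []" "phiw (Pi # w) = phiw w" "phiw (Y # w) = Y # w"
  by (simp_all add: phiw_def)

definition Phi :: "ncpoly \<Rightarrow> ncpoly" where "Phi p = lin (\<lambda>u a. sg (phiw u) a) p"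

lemma addv_Phi: "addv (\<lambda>u a. sg (phiw u) a)" by (simp add: addv_def single_add)

lemma Phi_add: "Phi (p + q) = Phi p + Phi q"
  unfolding Phi_def by (rule lin_add[OF addv_Phi])
lemma Phi_diff: "Phi (p - q) = Phi p - Phi q"
  unfolding Phi_def by (rule lin_diff[OF addv_Phi])
lemma Phi_zero[simp]: "Phi 0 = 0" by (simp add: Phi_def)
lemma Phi_sum: "Phi (\<Sum>i\<in>I. f i) = (\<Sum>i\<in>I. Phi (f i))"
  unfolding Phi_def by (rule lin_sum[OF addv_Phi])
lemma Phi_single: "Phi (sg u a) = sg (phiw u) a"
  unfolding Phi_def by (simp add: lin_single)

lemma Phi_smult: "Phi (smult c x) = smult c (Phi x)"
proof -
  have "Phi (smult c x) = (\<Sum>u\<in>ks x. sg (phiw u) (c * lk x u))"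
    unfolding Phi_def by (subst lin_superset[of "ks x"]) (auto simp: keys_smult)
  also have "\<dots> = smult c (Phi x)"
    by (simp add: Phi_def lin_def smult_sum smult_single)
  finally show ?thesis .
qed

lemma Phi_prep_Pi: "Phi (prep Pi X) = Phi X"
  by (simp add: prep_expand Phi_sum Phi_single) (simp add: Phi_def lin_def)

lemma lin_Phi:
  assumes "addv h" shows "lin h (Phi q) = (\<Sum>v\<in>ks q. h (phiw v) (lk q v))"
  unfolding Phi_def lin_def[of _ q]
  by (simp add: lin_sum[OF assms] lin_single addv_zero[OF assms])

lemma zero_lemma:
  assumes "Phi q = 0"
  shows "(\<Sum>v\<in>ks q. smult (c * lk q v) (G (phiw v))) = 0"
proof -
  have a: "addv (\<lambda>w b. smult (c * b) (G w))"
    by (simp add: addv_def distrib_left smult_add_left)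
  have "lin (\<lambda>w b. smult (c * b) (G w)) (Phi q) = 0" by (simp only: assms lin_zero)
  thus ?thesis by (simp only: lin_Phi[OF a, of q])
qed


lemma wsh_Phi:
  "Phi (wsh u v) = Phi (wsh u (phiw v)) + Phi (wsh (phiw u) v) - Phi (wsh (phiw u) (phiw v))"
proof (induction u v rule: wsh.induct)
  case (5 u v)
  have e: "Phi (wsh (Pi # u) (Pi # v)) = Phi (wsh u (Pi # v)) + Phi (wsh (Pi # u) v) - Phi (wsh u v)"
    by (simp add: Phi_add Phi_diff Phi_prep_Pi)
  show ?case unfolding e "5.IH"(1) "5.IH"(2) "5.IH"(3) by (simp add: algebra_simps)
qed simp_all

definition endY :: "word set" where "endY = {w. w \<noteq> [] \<and> last w = Y}"

lemma endY_Cons: "a # w \<in> endY \<longleftrightarrow> (w = [] \<and> a = Y) \<or> w \<in> endY"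
  by (auto simp: endY_def)

lemma keys_prep_endY: "ks X \<subseteq> endY \<Longrightarrow> ks (prep a X) \<subseteq> endY"
  using keys_prep[of _ a X] by (fastforce simp: endY_Cons)

lemma keys_wsh:
  "(u = [] \<or> u \<in> endY) \<Longrightarrow> (v = [] \<or> v \<in> endY) \<Longrightarrow> (u \<noteq> [] \<or> v \<noteq> []) \<Longrightarrow> ks (wsh u v) \<subseteq> endY"
proof (induction u v rule: wsh.induct)
  case (1 v) then show ?case by auto
next
  case (2 a u) then show ?case by auto
next
  case (3 u b v)
  have "ks (wsh u (b # v)) \<subseteq> endY" using 3 by (auto simp: endY_Cons)
  then show ?case by (simp add: keys_prep_endY)
next
  case (4 u v)
  have "ks (wsh (Pi # u) v) \<subseteq> endY" using 4 by (auto simp: endY_Cons)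
  then show ?case by (simp add: keys_prep_endY)
next
  case (5 u v)
  have u: "u \<in> endY" using "5.prems" by (auto simp: endY_Cons)
  have v: "v \<in> endY" using "5.prems" by (auto simp: endY_Cons)
  have A: "ks (wsh u (Pi # v)) \<subseteq> endY" using "5.IH"(1) u "5.prems" by auto
  have B: "ks (wsh (Pi # u) v) \<subseteq> endY" using "5.IH"(2) v "5.prems" by auto
  have C: "ks (wsh u v) \<subseteq> endY" using "5.IH"(3) u v by (auto simp: endY_def)
  have P: "\<And>X. ks X \<subseteq> endY \<Longrightarrow> ks (prep Pi X) \<subseteq> endY"
    using keys_prep by (fastforce simp: endY_Cons)
  show ?case
    using P[OF A] P[OF B] P[OF C]
      keys_add[of "prep Pi (wsh u (Pi # v))" "prep Pi (wsh (Pi # u) v)"]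
      keys_diff[of "prep Pi (wsh u (Pi # v)) + prep Pi (wsh (Pi # u) v)" "prep Pi (wsh u v)"]
    by simp blast
qed

lemma shuffle_expand:
  "shuffle p q = (\<Sum>u\<in>ks p. \<Sum>v\<in>ks q. smult (lk p u * lk q v) (wsh u v))"
  by (simp add: shuffle_def)

lemma keys_shuffle:
  assumes "ks p \<subseteq> endY" "ks q \<subseteq> endY" shows "ks (shuffle p q) \<subseteq> endY"
proof
  fix w assume "w \<in> ks (shuffle p q)"
  then obtain u where u: "u \<in> ks p" "w \<in> ks (\<Sum>v\<in>ks q. smult (lk p u * lk q v) (wsh u v))"
    unfolding shuffle_expand by (blast dest: keys_sumD)
  then obtain v where v: "v \<in> ks q" "w \<in> ks (smult (lk p u * lk q v) (wsh u v))"
    by (blast dest: keys_sumD)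
  then have "w \<in> ks (wsh u v)" using keys_smult by blast
  note uvw = u(1) v(1) this
  thus "w \<in> endY" using uvw keys_wsh[of u v] assms by (auto simp: endY_def)
qed

lemma Phi_shuffle:
  assumes "Phi p = 0" "Phi q = 0" shows "Phi (shuffle p q) = 0"
proof -
  let ?c = "\<lambda>u v. lk p u * lk q v"
  have "Phi (shuffle p q) = (\<Sum>u\<in>ks p. \<Sum>v\<in>ks q. smult (?c u v) (Phi (wsh u v)))"
    by (simp add: shuffle_expand Phi_sum Phi_smult)
  also have "\<dots> = (\<Sum>u\<in>ks p. \<Sum>v\<in>ks q. smult (?c u v) (Phi (wsh u (phiw v))))
     + (\<Sum>u\<in>ks p. \<Sum>v\<in>ks q. smult (?c u v) (Phi (wsh (phiw u) v)))
     - (\<Sum>u\<in>ks p. \<Sum>v\<in>ks q. smult (?c u v) (Phi (wsh (phiw u) (phiw v))))"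
    apply (subst wsh_Phi)
    by (simp add: smult_add_right smult_diff_right sum.distrib sum_subtractf)
  also have "(\<Sum>u\<in>ks p. \<Sum>v\<in>ks q. smult (?c u v) (Phi (wsh u (phiw v)))) = 0"
  proof (rule sum.neutral, rule ballI)
    fix u show "(\<Sum>v\<in>ks q. smult (?c u v) (Phi (wsh u (phiw v)))) = 0"
      using zero_lemma[OF assms(2), of "lk p u" "\<lambda>c. Phi (wsh u c)"] by simp
  qed
  also have "(\<Sum>u\<in>ks p. \<Sum>v\<in>ks q. smult (?c u v) (Phi (wsh (phiw u) (phiw v)))) = 0"
  proof (rule sum.neutral, rule ballI)
    fix u show "(\<Sum>v\<in>ks q. smult (?c u v) (Phi (wsh (phiw u) (phiw v)))) = 0"
      using zero_lemma[OF assms(2), of "lk p u" "\<lambda>c. Phi (wsh (phiw u) c)"] by simp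
  qed
  also have "(\<Sum>u\<in>ks p. \<Sum>v\<in>ks q. smult (?c u v) (Phi (wsh (phiw u) v)))
      = (\<Sum>v\<in>ks q. \<Sum>u\<in>ks p. smult (lk q v * lk p u) (Phi (wsh (phiw u) v)))"
    by (subst sum.swap) (simp add: mult.commute)
  also have "\<dots> = 0"
  proof (rule sum.neutral, rule ballI)
    fix v show "(\<Sum>u\<in>ks p. smult (lk q v * lk p u) (Phi (wsh (phiw u) v))) = 0"
      using zero_lemma[OF assms(1), of "lk q v" "\<lambda>c. Phi (wsh c v)"] by simp
  qed
  finally show ?thesis by simp
qed


lemma qspan_diff: "a \<in> qspan S \<Longrightarrow> b \<in> qspan S \<Longrightarrow> a - b \<in> qspan S"
  using qspan_add[OF _ qspan_smult[of b S "-1"], of a] by (simp add: smult_minus1)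

lemma qspan_sum: "(\<And>i. i \<in> I \<Longrightarrow> f i \<in> qspan S) \<Longrightarrow> sum f I \<in> qspan S"
  by (induction I rule: infinite_finite_induct) (auto intro: qspan.intros)

lemma decomp: "w \<in> endY \<Longrightarrow> \<exists>a r. w = replicate a Pi @ Y # r \<and> (r = [] \<or> r \<in> endY)"
proof (induction w)
  case Nil then show ?case by (simp add: endY_def)
next
  case (Cons x w)
  show ?case
  proof (cases x)
    case Y then show ?thesis using Cons.prems by (auto simp: endY_def intro!: exI[of _ 0])
  next
    case Pi
    then have "w \<in> endY" using Cons.prems by (cases "w = []") (auto simp: endY_def)
    then obtain a r where "w = replicate a Pi @ Y # r \<and> (r = [] \<or> r \<in> endY)" using Cons.IH by blast
    then show ?thesis using Pi by (intro exI[of _ "Suc a"] exI[of _ r]) auto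
  qed
qed

lemma phiw_rep: "phiw (replicate a Pi @ Y # r) = Y # r"
  by (induction a) auto

lemma M_eq: "nmul (npow piv k) yv = sg (replicate k Pi @ [Y]) 1"
  by (simp add: npow_piv yv_def nmul_single_single)

lemma z0: "z 0 b = sg (replicate b Pi @ [Y]) 1"
  by (simp add: z_def M_eq nmul_one_left)

lemma z1: "z (Suc 0) (Suc a) = sg (Pi # replicate a Pi @ [Y]) 1 - sg (replicate a Pi @ [Y]) 1"
  unfolding z_def diff_Suc_Suc diff_zero M_eq by (simp add: nmul_one_right rho_def nmul_diff_left piv_def one_def nmul_single_single)

lemma blocks: "r = [] \<or> r \<in> endY \<Longrightarrow> \<exists>bs. (\<forall>(t, s)\<in>set bs. t \<le> s) \<and> zprod bs = sg r 1"
proof (induction "length r" arbitrary: r rule: less_induct)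
  case less
  show ?case
  proof (cases "r = []")
    case True then show ?thesis by (intro exI[of _ "[]"]) (simp add: one_def)
  next
    case False
    then have "r \<in> endY" using less.prems by blast
    then obtain a r' where r: "r = replicate a Pi @ Y # r'" and r': "r' = [] \<or> r' \<in> endY"
      using decomp by blast
    have "length r' < length r" using r by simp
    then obtain bs where bs: "(\<forall>(t, s)\<in>set bs. t \<le> s)" "zprod bs = sg r' 1"
      using less.hyps r' by blast
    show ?thesis
      by (intro exI[of _ "(0, a) # bs"]) (simp add: bs z0 nmul_single_single r)
  qed
qed

definition Gs :: "ncpoly set" where
  "Gs = {zprod ps | ps. ps \<noteq> [] \<and> 1 \<le> fst (hd ps) \<and> (\<forall>(t, s) \<in> set ps. t \<le> s)}"

lemma AG0_Gs: "AG0 = qspan Gs" by (simp add: AG0_def Gs_def)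

lemma gen_diff:
  assumes "r = [] \<or> r \<in> endY"
  shows "sg (replicate (Suc a) Pi @ Y # r) 1 - sg (replicate a Pi @ Y # r) 1 \<in> AG0"
proof -
  obtain bs where bs: "(\<forall>(t, s)\<in>set bs. t \<le> s)" "zprod bs = sg r 1"
    using blocks[OF assms] by blast
  have "zprod ((1, Suc a) # bs) = sg (replicate (Suc a) Pi @ Y # r) 1 - sg (replicate a Pi @ Y # r) 1"
    by (simp add: bs z1 nmul_diff_left nmul_single_single)
  moreover have "zprod ((1, Suc a) # bs) \<in> Gs"
    unfolding Gs_def using bs(1) by (intro CollectI exI[of _ "(1, Suc a) # bs"]) auto
  ultimately show ?thesis unfolding AG0_Gs by (metis qspan_gen)
qed

lemma D_in: "r = [] \<or> r \<in> endY \<Longrightarrow> sg (replicate a Pi @ Y # r) 1 - sg (Y # r) 1 \<in> AG0"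
proof (induction a)
  case 0 then show ?case by (simp add: AG0_def qspan_zero)
next
  case (Suc a)
  have "sg (replicate (Suc a) Pi @ Y # r) 1 - sg (Y # r) 1
     = (sg (replicate (Suc a) Pi @ Y # r) 1 - sg (replicate a Pi @ Y # r) 1)
       + (sg (replicate a Pi @ Y # r) 1 - sg (Y # r) 1)" by simp
  then show ?case using gen_diff[OF Suc.prems, of a] Suc unfolding AG0_Gs
    by (metis qspan_add)
qed

lemma K_sub:
  assumes "ks x \<subseteq> endY" "Phi x = 0" shows "x \<in> AG0"
proof -
  have "x = (\<Sum>w\<in>ks x. sg w (lk x w)) - (\<Sum>w\<in>ks x. sg (phiw w) (lk x w))"
    using repr[of x] assms(2) by (simp add: Phi_def lin_def)
  also have "\<dots> = (\<Sum>w\<in>ks x. smult (lk x w) (sg w 1 - sg (phiw w) 1))"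
    by (simp add: sum_subtractf smult_diff_right smult_single)
  finally have x: "x = \<dots>" .
  have "(\<Sum>w\<in>ks x. smult (lk x w) (sg w 1 - sg (phiw w) 1)) \<in> AG0"
    unfolding AG0_Gs
  proof (rule qspan_sum, rule qspan_smult)
    fix w assume "w \<in> ks x"
    then have "w \<in> endY" using assms(1) by blast
    then obtain a r where "w = replicate a Pi @ Y # r" "r = [] \<or> r \<in> endY"
      using decomp by blast
    then show "sg w 1 - sg (phiw w) 1 \<in> qspan Gs"
      using D_in[of r a] by (simp add: phiw_rep AG0_Gs)
  qed
  then show ?thesis using x by simp
qed

lemma last_app_endY: "v \<in> endY \<Longrightarrow> u @ v \<in> endY"
  by (auto simp: endY_def)

lemma keys_nmul_endY: "ks q \<subseteq> endY \<Longrightarrow> ks (nmul p q) \<subseteq> endY"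
  using keys_nmul[of _ p q] last_app_endY by blast

lemma keys_nmul_endY2: "ks p \<subseteq> endY \<Longrightarrow> ks q \<subseteq> insert [] endY \<Longrightarrow> ks (nmul p q) \<subseteq> endY"
  using keys_nmul[of _ p q] last_app_endY by fastforce

lemma keys_M: "ks (nmul (npow piv k) yv) \<subseteq> endY"
  by (simp add: M_eq endY_def)

lemma keys_z: "ks (z t s) \<subseteq> endY"
  unfolding z_def by (rule keys_nmul_endY[OF keys_M])

lemma keys_zprod: "ks (zprod ps) \<subseteq> insert [] endY"
proof (induction ps)
  case Nil then show ?case by (simp add: one_def)
next
  case (Cons p ps)
  obtain t s where "p = (t, s)" by force
  then show ?case using keys_nmul_endY2[OF keys_z Cons.IH] by auto
qed

definition K :: "ncpoly set" where "K = {x. ks x \<subseteq> endY \<and> Phi x = 0}"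

lemma Gs_K: "g \<in> Gs \<Longrightarrow> g \<in> K"
proof -
  assume "g \<in> Gs"
  then obtain ps where ps: "g = zprod ps" "ps \<noteq> []" "1 \<le> fst (hd ps)" by (auto simp: Gs_def)
  then obtain t s rest where pr: "ps = (t, s) # rest" by (metis list.exhaust prod.collapse)
  with ps obtain t' where t: "t = Suc t'" by (metis Suc_le_D fst_conv list.sel(1) One_nat_def)
  define R where "R = npow rho t'"
  define M where "M = nmul (npow piv (s - t)) yv"
  define Z where "Z = zprod rest"
  define X where "X = nmul R (nmul M Z)"
  have "g = nmul (nmul (nmul rho R) M) Z"
    using ps(1) pr t by (simp add: z_def R_def M_def Z_def)
  also have "\<dots> = nmul rho X" by (simp add: nmul_assoc X_def)
  also have "\<dots> = prep Pi X - X"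
    by (simp add: rho_def nmul_diff_left nmul_one_left prep_def piv_def)
  finally have g: "g = prep Pi X - X" .
  have kX: "ks X \<subseteq> endY" unfolding X_def
    by (rule keys_nmul_endY, rule keys_nmul_endY2) (simp_all add: M_def keys_M Z_def keys_zprod)
  have "ks g \<subseteq> endY"
    using g keys_diff[of "prep Pi X" X] keys_prep_endY[OF kX, of Pi] kX by blast
  moreover have "Phi g = 0" using g by (simp add: Phi_diff Phi_prep_Pi)
  ultimately show ?thesis by (simp add: K_def)
qed

lemma AG0_K: "x \<in> AG0 \<Longrightarrow> x \<in> K"
  unfolding AG0_Gs
proof (induction rule: qspan.induct)
  case qspan_zero then show ?case by (simp add: K_def)
next
  case (qspan_gen x) then show ?case by (rule Gs_K)
next
  case (qspan_add a b) then show ?case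
    using keys_add[of a b] by (auto simp: K_def Phi_add)
next
  case (qspan_smult a c) then show ?case
    using keys_smult[of c a] by (auto simp: K_def Phi_smult)
qed

theorem proposition9p1:
  assumes "u \<in> AG0" and "v \<in> AG0"
  shows "shuffle u v \<in> AG0"
proof -
  have "u \<in> K" "v \<in> K" using assms AG0_K by auto
  then show ?thesis
    by (intro K_sub) (auto simp: K_def keys_shuffle Phi_shuffle)
qed

end
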